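(* For $w\in S_n$, $$\Delta(\bar\chi^w)=\sum\bar\chi^{\,y_B}\otimes\bar\chi^{\,u_A},$$ the sum over all decompositions $A\sqcup B=\{1,\dots,n\}$ such that $\iota(w)_B$ is an inversion table, where $y_B\in S_{|B|}$ is the permutation with inversion table $\iota(w)_B$ and $u_A\in S_{|A|}$ is the permutation whose dual inversion table is the componentwise minimum $\iota^\vee(w)_A\wedge\iota^\vee(\mathrm{id}_{|A|})$, i.e. writing $A=\{a_1<\dots<a_r\}$, $\iota^\vee_k(u_A)=\min(n-a_k-\iota_{a_k}(w),\,r-k)$ for $1\le k\le r$.
   Context: Let $q$ be a prime power, $\mathfrak{ut}_N$ the additive group of strictly upper triangular $N\times N$ matrices over $\mathbb{F}_q$, $e_{ij}(t)$ the matrix with $t$ at $(i,j)$ and zeros elsewhere. For $w\in S_N$: $\iota_k(w)=\#\{i<w^{-1}(k):w(i)>k\}$ (inversion table) and $\iota^\vee_k(w)=N-k-\iota_k(w)$ (dual inversion table); a sequence $(c_1,\dots,c_\ell)$ is an inversion table iff $0\le c_k\le\ell-k$ for all $k$, and then it determines a unique permutation of $S_\ell$; similarly a dual inversion table. For $B=\{b_1<\dots<b_\ell\}$, $\iota(w)_B=(\iota_{b_1}(w),\dots,\iota_{b_\ell}(w))$. $\mathfrak{ut}_w=\{x:x_{ij}\ne0\Rightarrow0<j-i\le\iota_i(w)\}$; these form a lattice of subgroups whose normal lattice supercharacter theory has supercharacters $\chi^w=\sum_\psi\psi(1)\psi$ over irreducible $\psi$ with $\mathfrak{ut}_w$ the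 largest lattice member in $\ker\psi$; $\mathrm{scf}(\mathfrak{ut}_N)$ is their span. $\bar\chi^w$ is the character of $\mathrm{Ind}_{\mathfrak{ut}_w}^{\mathfrak{ut}_N}(\mathbf 1)$, equal to $\sum_{v:\mathfrak{ut}_v\supseteq\mathfrak{ut}_w}\chi^v$. For $A\subseteq\{1,\dots,N\}$ with $|A|=k$, $m=N-k$: with $c_i=N-\#\{a\in A:a>i\}$ let $U_A=\{(i,j):i\in A,j>c_i\}$, $L_A=\{(i,j):i\in A,j\le c_i\}$, $U_A^\vee=\{(i,j):i\notin A,j\le c_i\}$, $R_A=\{(i,j):i\notin A,j>c_i\}$ (with $i<j$), and $\mathfrak{ut}_A,\mathfrak{l}_A,\mathfrak{ut}_A^\vee,\mathfrak{r}_A$ the subgroups supported on them; identify $\mathfrak{ut}_A^\vee\cong\mathfrak{ut}_m$ via $e_{ij}(t)\mapsto e_{i-s,j-s}(t)$, $s=\#\{a\in A:a<i\}$, and $\mathfrak{ut}_A\cong\mathfrak{ut}_k$ via $e_{ij}(t)\mapsto e_{i-\#\{b<i:b\notin A\},j-m}(t)$. $\mathrm{Dela}_A(\gamma)(u',u)=q^{-|L_A|-|R_A|}\sum_{l\in\mathfrak{l}_A,r\in\mathfrak{r}_A}(\frac{-1}{q-1})^{\#\{(i,j):r_{ij}\ne0\}}\gamma(l+u'+u+r)$, an element of $\mathrm{scf}(\mathfrak{ut}_m)\otimes\mathrm{scf}(\mathfrak{ut}_k)$. The coproduct is $\Delta(\alpha)=\sum_{A\subseteq\{1,\dots,N\}}\mathrm{Dela}_A(\alpha)$.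 *)

theory Defs
  imports Complex_Main "HOL-Combinatorics.Permutations"
begin

text \<open>N x N matrices over a field are functions nat => nat => 'a (1-indexed).\<close>
type_synonym 'a mat = "nat \<Rightarrow> nat \<Rightarrow> 'a"

definition madd :: "('a::plus) mat \<Rightarrow> 'a mat \<Rightarrow> 'a mat" where
  "madd x y = (\<lambda>i j. x i j + y i j)"

definition mneg :: "('a::uminus) mat \<Rightarrow> 'a mat" where
  "mneg x = (\<lambda>i j. - x i j)"

definition supp_mats :: "(nat \<times> nat) set \<Rightarrow> ('a::zero) mat set" where
  "supp_mats S = {x. \<forall>i j. x i j \<noteq> 0 \<longrightarrow> (i, j) \<in> S}"

definition ut :: "nat \<Rightarrow> ('a::zero) mat set" where
  "ut N = supp_mats {(i, j). 1 \<le> i \<and> i < j \<and> j \<le> N}"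

definition inv_tab :: "nat \<Rightarrow> (nat \<Rightarrow> nat) \<Rightarrow> nat \<Rightarrow> nat" where
  "inv_tab N w k = card {i \<in> {1..N}. i < inv w k \<and> w i > k}"

definition dual_inv_tab :: "nat \<Rightarrow> (nat \<Rightarrow> nat) \<Rightarrow> nat \<Rightarrow> nat" where
  "dual_inv_tab N w k = N - k - inv_tab N w k"

definition is_inv_table :: "nat \<Rightarrow> (nat \<Rightarrow> nat) \<Rightarrow> bool" where
  "is_inv_table l c = (\<forall>k\<in>{1..l}. c k \<le> l - k)"

definition perm_of_inv_table :: "nat \<Rightarrow> (nat \<Rightarrow> nat) \<Rightarrow> (nat \<Rightarrow> nat)" where
  "perm_of_inv_table l c = (THE v. v permutes {1..l} \<and> (\<forall>k\<in>{1..l}. inv_tab l v k = c k))"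

definition perm_of_dual_inv_table :: "nat \<Rightarrow> (nat \<Rightarrow> nat) \<Rightarrow> (nat \<Rightarrow> nat)" where
  "perm_of_dual_inv_table l c =
     (THE v. v permutes {1..l} \<and> (\<forall>k\<in>{1..l}. dual_inv_tab l v k = c k))"

text \<open>iota(w)_B : k-th entry is c(b_k), b_1 < ... < b_l the elements of B.\<close>
definition restrict_seq :: "(nat \<Rightarrow> nat) \<Rightarrow> nat set \<Rightarrow> nat \<Rightarrow> nat" where
  "restrict_seq c B = (\<lambda>k. c (sorted_list_of_set B ! (k - 1)))"

definition ut_perm :: "nat \<Rightarrow> (nat \<Rightarrow> nat) \<Rightarrow> ('a::zero) mat set" where
  "ut_perm N w = {x \<in> ut N. \<forall>i j. x i j \<noteq> 0 \<longrightarrow> j - i \<le> inv_tab N w i}"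

text \<open>Character of Ind_H^G(1) via the Frobenius formula (1/|H|) sum_g 1_H(g^{-1} x g).\<close>
definition ind_triv :: "('a::group_add) mat set \<Rightarrow> 'a mat set \<Rightarrow> 'a mat \<Rightarrow> complex" where
  "ind_triv G H x =
     (\<Sum>g\<in>G. if madd (madd (mneg g) x) g \<in> H then 1 else 0) / of_nat (card H)"

definition barchi :: "nat \<Rightarrow> (nat \<Rightarrow> nat) \<Rightarrow> ('a::{finite,field}) mat \<Rightarrow> complex" where
  "barchi N w = ind_triv (ut N) (ut_perm N w)"

definition cA :: "nat \<Rightarrow> nat set \<Rightarrow> nat \<Rightarrow> nat" where
  "cA N A i = N - card {a \<in> A. a > i}"

definition L_pos :: "nat \<Rightarrow> nat set \<Rightarrow> (nat \<times> nat) set" where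
  "L_pos N A = {(i, j). i \<in> A \<and> i < j \<and> j \<le> cA N A i}"

definition R_pos :: "nat \<Rightarrow> nat set \<Rightarrow> (nat \<times> nat) set" where
  "R_pos N A = {(i, j). i \<in> {1..N} - A \<and> i < j \<and> cA N A i < j \<and> j \<le> N}"

text \<open>Inverse of the identification ut_A^dual = ut_m, e_ij(t) -> e_{i-s,j-s}(t).\<close>
definition embed_dual :: "nat \<Rightarrow> nat set \<Rightarrow> ('a::zero) mat \<Rightarrow> 'a mat" where
  "embed_dual N A u' = (\<lambda>i j.
     if i \<in> {1..N} - A \<and> i < j \<and> j \<le> cA N A i
     then u' (i - card {a \<in> A. a < i}) (j - card {a \<in> A. a < i}) else 0)"

text \<open>Inverse of the identification ut_A = ut_k, e_ij(t) -> e_{i - #{b<i, b notin A}, j-m}(t).\<close>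
definition embed_A :: "nat \<Rightarrow> nat set \<Rightarrow> ('a::zero) mat \<Rightarrow> 'a mat" where
  "embed_A N A u = (\<lambda>i j.
     if i \<in> A \<and> i < j \<and> cA N A i < j \<and> j \<le> N
     then u (i - card {b \<in> {1..N} - A. b < i}) (j - (N - card A)) else 0)"

definition Dela :: "nat \<Rightarrow> nat set \<Rightarrow> (('a::{finite,field}) mat \<Rightarrow> complex)
                     \<Rightarrow> 'a mat \<times> 'a mat \<Rightarrow> complex" where
  "Dela N A \<gamma> = (\<lambda>(u', u).
     (1 / of_nat (card (UNIV :: 'a set)) ^ (card (L_pos N A) + card (R_pos N A))) *
     (\<Sum>l\<in>(supp_mats (L_pos N A) :: 'a mat set). \<Sum>r\<in>(supp_mats (R_pos N A) :: 'a mat set).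
        (- 1 / (of_nat (card (UNIV :: 'a set)) - 1)) ^ card {(i, j) \<in> R_pos N A. r i j \<noteq> 0} *
        \<gamma> (madd (madd (madd l (embed_dual N A u')) (embed_A N A u)) r)))"

text \<open>Coproduct, as an element of the graded sum of scf(ut_{N-k}) (x) scf(ut_k):
  the k-th component (a function on ut_{N-k} x ut_k) collects the A with |A| = k.\<close>
definition coproduct :: "nat \<Rightarrow> (('a::{finite,field}) mat \<Rightarrow> complex)
                          \<Rightarrow> nat \<Rightarrow> 'a mat \<times> 'a mat \<Rightarrow> complex" where
  "coproduct N \<alpha> k = (\<lambda>p. \<Sum>A\<in>{A. A \<subseteq> {1..N} \<and> card A = k}. Dela N A \<alpha> p)"

end

theory Submission
  imports Defs
begin

lemma sl_card_less:
  fixes B :: "nat set"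
  assumes "finite B" "k < card B"
  shows "card {b \<in> B. b < sorted_list_of_set B ! k} = k"
proof -
  let ?xs = "sorted_list_of_set B"
  have ss: "sorted_wrt (<) ?xs" using assms(1) by simp
  have len: "length ?xs = card B" using assms(1) by simp
  have st: "set ?xs = B" using assms(1) by simp
  have "{b \<in> B. b < ?xs ! k} = (\<lambda>t. ?xs ! t) ` {..<k}"
  proof
    show "{b \<in> B. b < ?xs ! k} \<subseteq> (\<lambda>t. ?xs ! t) ` {..<k}"
    proof
      fix b assume "b \<in> {b \<in> B. b < ?xs ! k}"
      then have b: "b \<in> set ?xs" "b < ?xs ! k" using st by auto
      then obtain t where t: "t < length ?xs" "?xs ! t = b" by (meson in_set_conv_nth)
      have "t < k"
      proof (rule ccontr)
        assume "\<not> t < k"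
        then have "k \<le> t" by simp
        then have "?xs ! k \<le> ?xs ! t"
          using ss t(1) by (metis le_eq_less_or_eq less_imp_le sorted_wrt_nth_less)
        then show False using b t by simp
      qed
      then show "b \<in> (\<lambda>t. ?xs ! t) ` {..<k}" using t by auto
    qed
    show "(\<lambda>t. ?xs ! t) ` {..<k} \<subseteq> {b \<in> B. b < ?xs ! k}"
    proof
      fix b assume "b \<in> (\<lambda>t. ?xs ! t) ` {..<k}"
      then obtain t where t: "t < k" "b = ?xs ! t" by auto
      then have "?xs ! t < ?xs ! k" using ss assms(2) len by (simp add: sorted_wrt_nth_less)
      moreover have "?xs ! t \<in> B" using t assms(2) len st nth_mem[of t ?xs] by auto
      ultimately show "b \<in> {b \<in> B. b < ?xs ! k}" using t by auto
    qed
  qed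
  moreover have "inj_on (\<lambda>t. ?xs ! t) {..<k}"
    using distinct_sorted_list_of_set[of B] assms len
    by (auto simp: inj_on_def nth_eq_iff_index_eq)
  ultimately show ?thesis by (simp add: card_image)
qed

lemma sl_mem:
  fixes B :: "nat set"
  assumes "finite B" "k < card B"
  shows "sorted_list_of_set B ! k \<in> B"
  using assms by (metis length_sorted_list_of_set nth_mem set_sorted_list_of_set)

lemma sl_nth_card:
  fixes B :: "nat set"
  assumes "finite B" "i \<in> B"
  shows "card {b \<in> B. b < i} < card B \<and> sorted_list_of_set B ! card {b \<in> B. b < i} = i"
proof -
  let ?xs = "sorted_list_of_set B"
  obtain t where t: "t < length ?xs" "?xs ! t = i" using assms by (metis in_set_conv_nth set_sorted_list_of_set)
  have "t < card B" using t assms by simp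
  then have "card {b \<in> B. b < i} = t" using sl_card_less[OF assms(1)] t by metis
  then show ?thesis using t \<open>t < card B\<close> by simp
qed

lemma perm_range:
  assumes "w permutes {1..N}" "1 \<le> x" "x \<le> N"
  shows "1 \<le> w x \<and> w x \<le> N"
  using assms permutes_in_image[OF assms(1), of x] by auto

lemma inv_tab_le:
  assumes "w permutes {1..N}"
  shows "inv_tab N w k \<le> N - k"
proof -
  let ?S = "{i \<in> {1..N}. i < inv w k \<and> w i > k}"
  have sub: "w ` ?S \<subseteq> {k<..N}"
    using perm_range[OF assms] by auto
  have ij: "inj_on w ?S" using permutes_inj[OF assms] by (auto simp: inj_on_def inj_def)
  have "card (w ` ?S) \<le> card {k<..N}" using sub by (rule card_mono[OF finite_greaterThanAtMost])
  moreover have "card (w ` ?S) = card ?S" using ij by (rule card_image)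
  ultimately have
  "card ?S \<le> card {k<..N}" by simp
  then show ?thesis by (simp add: inv_tab_def)
qed

lemma inv_tab_alt:
  assumes "v permutes {1..l}"
  shows "inv_tab l v k = card {b \<in> {1..l}. k < b \<and> inv v b < inv v k}"
proof -
  let ?G = "{b \<in> {1..l}. k < b \<and> inv v b < inv v k}"
  have pi: "inv v permutes {1..l}" using assms by (rule permutes_inv)
  have "{i \<in> {1..l}. i < inv v k \<and> v i > k} = inv v ` ?G"
  proof (rule set_eqI, rule iffI)
    fix i assume "i \<in> {i \<in> {1..l}. i < inv v k \<and> v i > k}"
    then have i: "i \<in> {1..l}" "i < inv v k" "v i > k" by auto
    have vi: "v i \<in> {1..l}" using i(1) permutes_in_image[OF assms] by blast
    have "inv v (v i) = i" using assms by (simp add: permutes_inverses)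
    then show "i \<in> inv v ` ?G"
      using i vi by (intro image_eqI[of _ _ "v i"]) auto
  next
    fix i assume "i \<in> inv v ` ?G"
    then show "i \<in> {i \<in> {1..l}. i < inv v k \<and> v i > k}"
      using assms pi perm_range[OF assms] perm_range[OF pi] by (auto simp: permutes_inverses)
  qed
  moreover have "inj_on (inv v) ?G"
    using permutes_inj[OF pi] by (auto simp: inj_on_def inj_def)
  ultimately show ?thesis by (simp add: inv_tab_def card_image)
qed

lemma pos_card:
  assumes "p permutes {1..l}" "a \<in> {1..l}"
  shows "p a = Suc (card {b \<in> {1..l}. p b < p a})"
proof -
  have im: "p ` {b \<in> {1..l}. p b < p a} = {x \<in> {1..l}. x < p a}"
  proof (rule set_eqI, rule iffI)
    fix x assume "x \<in> p ` {b \<in> {1..l}. p b < p a}"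
    then show "x \<in> {x \<in> {1..l}. x < p a}" using perm_range[OF assms(1)] by auto
  next
    fix x assume x: "x \<in> {x \<in> {1..l}. x < p a}"
    then have "inv p x \<in> {1..l}" using assms permutes_in_image[OF permutes_inv[OF assms(1)]] by blast
    then show "x \<in> p ` {b \<in> {1..l}. p b < p a}" using x assms
      by (auto simp: permutes_inverses intro!: image_eqI[of _ _ "inv p x"])
  qed
  have ij: "inj_on p {b \<in> {1..l}. p b < p a}"
    using permutes_inj[OF assms(1)] by (auto simp: inj_on_def inj_def)
  have pa: "p a \<in> {1..l}" using assms permutes_in_image[OF assms(1)] by blast
  have e2: "{x \<in> {1..l}. x < p a} = {1..<p a}"
    using pa by auto
  have "p a \<ge> 1" using pa by auto
  have "card {b \<in> {1..l}. p b < p a} = card (p ` {b \<in> {1..l}. p b < p a})"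
    using ij by (rule card_image[symmetric])
  also have "\<dots> = card {1..<p a}" unfolding im e2 ..
  finally have "card {b \<in> {1..l}. p b < p a} = p a - 1" by simp
  then show ?thesis using \<open>p a \<ge> 1\<close> by simp
qed

lemma uniq_step:
  assumes "card G = card G'" "finite G" "finite G'" "b \<in> G" "b \<notin> G'"
  shows "\<exists>c. c \<in> G' \<and> c \<notin> G"
proof (rule ccontr)
  assume "\<not> ?thesis"
  then have "G' \<subseteq> G - {b}" using assms by auto
  then have "card G' \<le> card (G - {b})" by (rule card_mono[OF finite_Diff[OF assms(2)]])
  moreover have "card (G - {b}) = card G - 1" using assms by (simp add: card_Diff_singleton)
  moreover have "card G > 0" using assms(2,4) by (auto simp: card_gt_0_iff)
  ultimately show False using assms(1) by linarith
qed

lemma inv_tab_unique: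
  assumes v: "v permutes {1..l}" and v': "v' permutes {1..l}"
    and eq: "\<forall>k\<in>{1..l}. inv_tab l v k = inv_tab l v' k"
  shows "v = v'"
proof -
  define p where "p = inv v"
  define p' where "p' = inv v'"
  have pp: "p permutes {1..l}" "p' permutes {1..l}" using v v' by (simp_all add: p_def p'_def permutes_inv)
  define Q where "Q k \<longleftrightarrow> (\<forall>a b. k \<le> a \<longrightarrow> a \<le> l \<longrightarrow> k \<le> b \<longrightarrow> b \<le> l \<longrightarrow> (p a < p b \<longleftrightarrow> p' a < p' b))" for k
  have key: "p b < p k \<longleftrightarrow> p' b < p' k"
    if Q: "Q (Suc k)" and k: "1 \<le> k" "k \<le> l" and b: "k < b" "b \<le> l" for k b
  proof -
    define G where "G = {b \<in> {1..l}. k < b \<and> p b < p k}"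
    define G' where "G' = {b \<in> {1..l}. k < b \<and> p' b < p' k}"
    have cG: "card G = card G'" using eq k inv_tab_alt[OF v, of k] inv_tab_alt[OF v', of k]
      by (simp add: G_def G'_def p_def p'_def)
    have fin: "finite G" "finite G'" by (simp_all add: G_def G'_def)
    have injp: "p x = p y \<Longrightarrow> x = y" "p' x = p' y \<Longrightarrow> x = y" for x y
      using injD[OF permutes_inj[OF pp(1)]] injD[OF permutes_inj[OF pp(2)]] by blast+
    have one: False if h: "b' \<in> G" "b' \<notin> G'" "card G = card G'" "finite G" "finite G'"
      "\<And>a b. k < a \<Longrightarrow> a \<le> l \<Longrightarrow> k < b \<Longrightarrow> b \<le> l \<Longrightarrow> (p a < p b \<longleftrightarrow> p' a < p' b)"
      "\<And>x y. p x = p y \<Longrightarrow> x = y" "\<And>x y. p' x = p' y \<Longrightarrow> x = y"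
      "G = {b \<in> {1..l}. k < b \<and> p b < p k}" "G' = {b \<in> {1..l}. k < b \<and> p' b < p' k}"
      for b' G G' and p p' :: "nat \<Rightarrow> nat"
    proof -
      obtain c where c: "c \<in> G'" "c \<notin> G" using uniq_step[OF h(3,4,5,1,2)] by blast
      have "p b' < p k" "k < b'" "b' \<le> l" using h(1,9) by auto
      have "\<not> p' b' < p' k" using h(1,2,9,10) by auto
      moreover have "p' b' \<noteq> p' k" using \<open>k < b'\<close> h(8) by blast
      ultimately have "p' k < p' b'" by linarith
      have "p' c < p' k" "k < c" "c \<le> l" using c h(10) by auto
      have "c \<in> {1..l}" using c h(10) by auto
      then have "\<not> p c < p k" using c h(9) \<open>k < c\<close> by auto
      moreover have "p c \<noteq> p k" using \<open>k < c\<close> h(7) by blast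
      ultimately have "p k < p c" by linarith
      have "p b' < p c" using \<open>p b' < p k\<close> \<open>p k < p c\<close> by simp
      moreover have "\<not> p' b' < p' c" using \<open>p' c < p' k\<close> \<open>p' k < p' b'\<close> by simp
      ultimately show False using h(6)[of b' c] \<open>k < b'\<close> \<open>b' \<le> l\<close> \<open>k < c\<close> \<open>c \<le> l\<close> by simp
    qed
    have Q': "\<And>a b. k < a \<Longrightarrow> a \<le> l \<Longrightarrow> k < b \<Longrightarrow> b \<le> l \<Longrightarrow> (p a < p b \<longleftrightarrow> p' a < p' b)"
      using Q unfolding Q_def by (meson Suc_leI)
    show ?thesis
    proof
      assume "p b < p k"
      then have "b \<in> G" using b k by (simp add: G_def)
      show "p' b < p' k"
      proof (rule ccontr)
        assume "\<not> p' b < p' k"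
        then have "b \<notin> G'" by (simp add: G'_def)
        show False using one[OF \<open>b \<in> G\<close> \<open>b \<notin> G'\<close> cG fin Q' injp G_def G'_def] .
      qed
    next
      assume "p' b < p' k"
      then have "b \<in> G'" using b k by (simp add: G'_def)
      show "p b < p k"
      proof (rule ccontr)
        assume "\<not> p b < p k"
        then have "b \<notin> G" by (simp add: G_def)
        have Q'': "\<And>a b. k < a \<Longrightarrow> a \<le> l \<Longrightarrow> k < b \<Longrightarrow> b \<le> l \<Longrightarrow> (p' a < p' b \<longleftrightarrow> p a < p b)"
          using Q' by blast
        show False using one[OF \<open>b \<in> G'\<close> \<open>b \<notin> G\<close> cG[symmetric] fin(2) fin(1) Q'' injp(2) injp(1) G'_def G_def] .
      qed
    qed
  qed
  have Q1: "Q 1"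
  proof (cases "l = 0")
    case True then show ?thesis by (simp add: Q_def)
  next
    case False
    have "Q (l + 1)" by (auto simp: Q_def)
    moreover have "\<And>k. 1 \<le> k \<Longrightarrow> k < l + 1 \<Longrightarrow> Q (Suc k) \<Longrightarrow> Q k"
    proof -
      fix k assume k: "1 \<le> k" "k < l + 1" "Q (Suc k)"
      have injp: "p x = p y \<Longrightarrow> x = y" "p' x = p' y \<Longrightarrow> x = y" for x y
        using injD[OF permutes_inj[OF pp(1)]] injD[OF permutes_inj[OF pp(2)]] by blast+
      show "Q k" unfolding Q_def
      proof (intro allI impI)
        fix a b assume ab: "k \<le> a" "a \<le> l" "k \<le> b" "b \<le> l"
        show "p a < p b \<longleftrightarrow> p' a < p' b"
        proof (cases "a = k")
          case True
          show ?thesis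
          proof (cases "b = k")
            case True then show ?thesis using \<open>a = k\<close> by simp
          next
            case False
            then have "k < b" using ab by simp
            have "p b < p k \<longleftrightarrow> p' b < p' k" using key[OF k(3) k(1) _ \<open>k < b\<close> ab(4)] k by simp
            moreover have "p b \<noteq> p k" "p' b \<noteq> p' k" using injp False by blast+
            ultimately show ?thesis using \<open>a = k\<close> by auto
          qed
        next
          case False
          then have "k < a" using ab by simp
          show ?thesis
          proof (cases "b = k")
            case True
            show ?thesis using key[OF k(3) k(1) _ \<open>k < a\<close> ab(2)] k True by simp
          next
            case False
            then show ?thesis using k(3) \<open>k < a\<close> ab unfolding Q_def by (simp add: Suc_leI)
          qed
        qed
      qed
    qed
    ultimately show ?thesis using inc_induct[of 1 "l + 1" Q] by simp
  qed
  have "p a = p' a" for a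
  proof (cases "a \<in> {1..l}")
    case True
    have "{b \<in> {1..l}. p b < p a} = {b \<in> {1..l}. p' b < p' a}"
      using Q1 True unfolding Q_def by auto
    then show ?thesis using pos_card[OF pp(1) True] pos_card[OF pp(2) True] by simp
  next
    case False
    then show ?thesis using pp by (simp add: permutes_not_in)
  qed
  then have "p = p'" by auto
  then have "inv (inv v) = inv (inv v')" unfolding p_def p'_def by simp
  then show ?thesis using inv_inv_eq[OF permutes_bij[OF v]] inv_inv_eq[OF permutes_bij[OF v']] by simp
qed

lemma prod_tab_fact: "(\<Prod>k\<in>{1..l}. Suc (l - k)) = (fact l :: nat)"
proof -
  have "(\<Prod>k\<in>{1..l}. Suc (l - k)) = prod ((-) (l + 1)) {1..l}"
    by (rule prod.cong) auto
  also have "\<dots> = \<Prod>{1..l}"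
    using prod.atLeastAtMost_rev [of "\<lambda>i. i" 1 l] by (simp add: add.commute)
  also have "\<dots> = fact l" by (simp add: fact_prod)
  finally show ?thesis .
qed

lemma inv_tab_exists:
  assumes "is_inv_table l c"
  shows "\<exists>v. v permutes {1..l} \<and> (\<forall>k\<in>{1..l}. inv_tab l v k = c k)"
proof -
  define P where "P = {v. v permutes {1..l}}"
  define Tab where "Tab = PiE {1..l} (\<lambda>k. {0..l-k})"
  define Phi where "Phi v = restrict (inv_tab l v) {1..l}" for v
  have sub: "Phi ` P \<subseteq> Tab"
    unfolding P_def Tab_def Phi_def using inv_tab_le by auto
  have inj: "inj_on Phi P"
  proof (rule inj_onI)
    fix v v' assume "v \<in> P" "v' \<in> P" "Phi v = Phi v'"
    then have "\<forall>k\<in>{1..l}. inv_tab l v k = inv_tab l v' k"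
      unfolding Phi_def by (metis restrict_apply')
    then show "v = v'" using inv_tab_unique \<open>v \<in> P\<close> \<open>v' \<in> P\<close> unfolding P_def by blast
  qed
  have "card (Phi ` P) = card P" using inj by (rule card_image)
  also have "\<dots> = fact l" unfolding P_def by (rule card_permutations) simp_all
  also have "\<dots> = (\<Prod>k\<in>{1..l}. Suc (l - k))" by (rule prod_tab_fact[symmetric])
  also have "\<dots> = card Tab" unfolding Tab_def by (subst card_PiE) auto
  finally have "card (Phi ` P) = card Tab" .
  moreover have "finite Tab" unfolding Tab_def by (simp add: finite_PiE)
  ultimately have eq: "Phi ` P = Tab" using sub card_subset_eq by blast
  have "restrict c {1..l} \<in> Tab" using assms unfolding Tab_def is_inv_table_def by auto
  then obtain v where v: "v \<in> P" "Phi v = restrict c {1..l}" using eq by (metis imageE)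
  have "\<forall>k\<in>{1..l}. inv_tab l v k = c k"
  proof
    fix k assume k: "k \<in> {1..l}"
    have "Phi v k = restrict c {1..l} k" using v by simp
    then show "inv_tab l v k = c k" using k unfolding Phi_def by simp
  qed
  then show ?thesis using v unfolding P_def by blast
qed

lemma perm_of_inv_table:
  assumes "is_inv_table l c"
  shows "perm_of_inv_table l c permutes {1..l} \<and> (\<forall>k\<in>{1..l}. inv_tab l (perm_of_inv_table l c) k = c k)"
proof -
  obtain v where v: "v permutes {1..l}" "\<forall>k\<in>{1..l}. inv_tab l v k = c k"
    using inv_tab_exists[OF assms] by blast
  have "(THE v. v permutes {1..l} \<and> (\<forall>k\<in>{1..l}. inv_tab l v k = c k)) = v"
  proof (rule the_equality)
    show "v permutes {1..l} \<and> (\<forall>k\<in>{1..l}. inv_tab l v k = c k)" using v by blast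
    fix v' assume "v' permutes {1..l} \<and> (\<forall>k\<in>{1..l}. inv_tab l v' k = c k)"
    then show "v' = v" using inv_tab_unique[of v' l v] v by auto
  qed
  then show ?thesis using v unfolding perm_of_inv_table_def by simp
qed

lemma perm_of_dual_inv_table:
  assumes "\<forall>k\<in>{1..l}. c k \<le> l - k"
  shows "perm_of_dual_inv_table l c permutes {1..l} \<and>
    (\<forall>k\<in>{1..l}. inv_tab l (perm_of_dual_inv_table l c) k = l - k - c k)"
proof -
  have "is_inv_table l (\<lambda>k. l - k - c k)" unfolding is_inv_table_def by auto
  then obtain v where v: "v permutes {1..l}" "\<forall>k\<in>{1..l}. inv_tab l v k = l - k - c k"
    using inv_tab_exists by blast
  have "(THE v. v permutes {1..l} \<and> (\<forall>k\<in>{1..l}. dual_inv_tab l v k = c k)) = v"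
  proof (rule the_equality)
    show "v permutes {1..l} \<and> (\<forall>k\<in>{1..l}. dual_inv_tab l v k = c k)"
      using v assms unfolding dual_inv_tab_def by auto
    fix v' assume h: "v' permutes {1..l} \<and> (\<forall>k\<in>{1..l}. dual_inv_tab l v' k = c k)"
    have "\<forall>k\<in>{1..l}. inv_tab l v' k = inv_tab l v k"
    proof
      fix k assume k: "k \<in> {1..l}"
      have "inv_tab l v' k \<le> l - k" using h inv_tab_le by blast
      moreover have "dual_inv_tab l v' k = c k" using h k by blast
      moreover have "inv_tab l v k = l - k - c k" using v(2) k by blast
      ultimately show "inv_tab l v' k = inv_tab l v k" unfolding dual_inv_tab_def by linarith
    qed
    then show "v' = v" using inv_tab_unique[of v' l v] v h by auto
  qed
  then show ?thesis using v unfolding perm_of_dual_inv_table_def by simp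
qed

definition Pn :: "nat \<Rightarrow> (nat \<times> nat) set" where
  "Pn N = {(i, j). 1 \<le> i \<and> i < j \<and> j \<le> N}"

definition Hs :: "nat \<Rightarrow> (nat \<Rightarrow> nat) \<Rightarrow> (nat \<times> nat) set" where
  "Hs N w = {(i, j). 1 \<le> i \<and> i < j \<and> j \<le> N \<and> j - i \<le> inv_tab N w i}"

lemma finite_Pn: "finite (Pn N)"
proof -
  have "Pn N \<subseteq> {1..N} \<times> {1..N}" by (auto simp: Pn_def)
  then show ?thesis by (rule finite_subset) simp
qed

lemma Hs_sub: "Hs N w \<subseteq> Pn N" by (auto simp: Hs_def Pn_def)

lemma finite_Hs: "finite (Hs N w)" using finite_subset[OF Hs_sub finite_Pn] .

lemma supp_mats_bij:
  "bij_betw (\<lambda>x. \<lambda>p\<in>S. x (fst p) (snd p)) (supp_mats S :: ('a::zero) mat set) (PiE S (\<lambda>_. UNIV))"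
proof (rule bij_betwI')
  fix x y :: "'a mat" assume x: "x \<in> supp_mats S" and y: "y \<in> supp_mats S"
  show "((\<lambda>p\<in>S. x (fst p) (snd p)) = (\<lambda>p\<in>S. y (fst p) (snd p))) = (x = y)"
  proof
    assume h: "(\<lambda>p\<in>S. x (fst p) (snd p)) = (\<lambda>p\<in>S. y (fst p) (snd p))"
    show "x = y"
    proof (intro ext)
      fix i j
      show "x i j = y i j"
      proof (cases "(i, j) \<in> S")
        case True
        then show ?thesis using fun_cong[OF h, of "(i, j)"] by simp
      next
        case False
        then have "x i j = 0" "y i j = 0" using x y unfolding supp_mats_def by auto
        then show ?thesis by simp
      qed
    qed
  qed simp
next
  fix x :: "'a mat" assume "x \<in> supp_mats S"
  show "(\<lambda>p\<in>S. x (fst p) (snd p)) \<in> PiE S (\<lambda>_. UNIV)" by simp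
next
  fix g assume g: "g \<in> PiE S (\<lambda>_. (UNIV :: 'a set))"
  define x where "x = (\<lambda>i j. if (i, j) \<in> S then g (i, j) else 0)"
  have "x \<in> supp_mats S" unfolding x_def supp_mats_def by auto
  moreover have "g = (\<lambda>p\<in>S. x (fst p) (snd p))"
  proof (rule ext)
    fix p show "g p = (\<lambda>p\<in>S. x (fst p) (snd p)) p"
      using g by (cases p) (auto simp: x_def PiE_def extensional_def)
  qed
  ultimately show "\<exists>x\<in>supp_mats S. g = (\<lambda>p\<in>S. x (fst p) (snd p))" by blast
qed

lemma supp_mats_card:
  assumes "finite S"
  shows "finite (supp_mats S :: ('a::{finite,zero}) mat set) \<and>
         card (supp_mats S :: 'a mat set) = card (UNIV :: 'a set) ^ card S"
proof -
  have b: "bij_betw (\<lambda>x. \<lambda>p\<in>S. x (fst p) (snd p)) (supp_mats S :: 'a mat set) (PiE S (\<lambda>_. UNIV))"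
    by (rule supp_mats_bij)
  have f: "finite (PiE S (\<lambda>_. (UNIV :: 'a set)))" using assms by (simp add: finite_PiE)
  have "card (PiE S (\<lambda>_. (UNIV :: 'a set))) = card (UNIV :: 'a set) ^ card S"
    using assms by (simp add: card_PiE)
  then show ?thesis using bij_betw_finite[OF b] f bij_betw_same_card[OF b] by simp
qed

lemma ut_eq: "ut N = supp_mats (Pn N)" by (simp add: ut_def Pn_def)

lemma ut_perm_eq: "ut_perm N w = supp_mats (Hs N w)"
  by (auto simp: ut_perm_def ut_def supp_mats_def Hs_def)

lemma conj_id: "madd (madd (mneg g) x) g = (x :: ('a::ab_group_add) mat)"
  by (simp add: madd_def mneg_def)

lemma barchi_eq:
  "barchi N w (x :: ('a::{finite,field}) mat) =
    (if x \<in> supp_mats (Hs N w) then of_nat (card (UNIV :: 'a set)) ^ card (Pn N) / of_nat (card (UNIV :: 'a set)) ^ card (Hs N w) else 0)"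
proof -
  have c1: "card (ut N :: 'a mat set) = card (UNIV :: 'a set) ^ card (Pn N)"
    using supp_mats_card[OF finite_Pn[of N], where 'a='a] by (simp add: ut_eq)
  have c2: "card (supp_mats (Hs N w) :: 'a mat set) = card (UNIV :: 'a set) ^ card (Hs N w)"
    using supp_mats_card[OF finite_Hs[of N w], where 'a='a] by simp
  show ?thesis
    unfolding barchi_def ind_triv_def conj_id
    by (simp add: c1 c2 ut_perm_eq)
qed

definition nzc :: "(nat \<times> nat) set \<Rightarrow> ('a::zero) mat \<Rightarrow> nat" where
  "nzc T r = card {(i, j) \<in> T. r i j \<noteq> 0}"

definition updm :: "('a::zero) mat \<Rightarrow> nat \<times> nat \<Rightarrow> 'a \<Rightarrow> 'a mat" where
  "updm r p t = (\<lambda>i j. if (i, j) = p then t else r i j)"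

lemma sum_indicator_pow:
  fixes c :: complex
  shows "(\<Sum>t\<in>(UNIV :: ('a::{finite,zero}) set). c ^ (if t \<noteq> 0 then 1 else 0)) =
         1 + (of_nat (card (UNIV :: 'a set)) - 1) * c"
proof -
  have "(\<Sum>t\<in>(UNIV :: 'a set). c ^ (if t \<noteq> 0 then 1 else 0)) =
        c ^ 0 + (\<Sum>t\<in>UNIV - {0 :: 'a}. c ^ (if t \<noteq> 0 then 1 else 0))"
    by (subst sum.remove[of _ 0]) simp_all
  also have "(\<Sum>t\<in>UNIV - {0 :: 'a}. c ^ (if t \<noteq> 0 then 1 else 0)) = (\<Sum>t\<in>UNIV - {0 :: 'a}. c)"
    by (rule sum.cong) auto
  also have "\<dots> = of_nat (card (UNIV - {0 :: 'a})) * c" by simp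
  also have "card (UNIV - {0 :: 'a}) = card (UNIV :: 'a set) - 1" by (simp add: card_Diff_singleton)
  also have "of_nat (card (UNIV :: 'a set) - 1) = (of_nat (card (UNIV :: 'a set)) - 1 :: complex)"
  proof -
    have "card (UNIV :: 'a set) \<ge> 1" using card_gt_0_iff[of "UNIV :: 'a set"] by simp
    then show ?thesis by (simp add: of_nat_diff)
  qed
  finally show ?thesis by simp
qed

lemma sum_vanish:
  fixes S T :: "(nat \<times> nat) set" and c :: complex
  assumes fT: "finite T" and ST: "S \<subseteq> T" and p0: "p0 \<in> S"
    and c: "1 + (of_nat (card (UNIV :: 'a set)) - 1) * c = 0"
  shows "(\<Sum>r\<in>(supp_mats S :: ('a::{finite,zero}) mat set). c ^ nzc T r) = 0"
proof -
  have fS: "finite S" using finite_subset[OF ST fT] .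
  let ?S0 = "S - {p0}"
  have fS0: "finite ?S0" using fS by simp
  have bij: "bij_betw (\<lambda>(r, t). updm r p0 t) ((supp_mats ?S0 :: 'a mat set) \<times> (UNIV :: 'a set)) (supp_mats S)"
  proof (rule bij_betwI')
    fix x y assume x: "x \<in> (supp_mats ?S0 :: 'a mat set) \<times> (UNIV :: 'a set)" and y: "y \<in> (supp_mats ?S0 :: 'a mat set) \<times> (UNIV :: 'a set)"
    obtain r t where xe: "x = (r, t)" by fastforce
    obtain r' t' where ye: "y = (r', t')" by fastforce
    have r: "\<And>i j. (i, j) \<notin> ?S0 \<Longrightarrow> r i j = 0" using x xe unfolding supp_mats_def by auto
    have r': "\<And>i j. (i, j) \<notin> ?S0 \<Longrightarrow> r' i j = 0" using y ye unfolding supp_mats_def by auto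
    show "((case x of (r, t) \<Rightarrow> updm r p0 t) = (case y of (r, t) \<Rightarrow> updm r p0 t)) = (x = y)"
    proof
      assume h: "(case x of (r, t) \<Rightarrow> updm r p0 t) = (case y of (r, t) \<Rightarrow> updm r p0 t)"
      then have h': "updm r p0 t = updm r' p0 t'" using xe ye by simp
      have "t = t'" using fun_cong[OF fun_cong[OF h', of "fst p0"], of "snd p0"] by (simp add: updm_def)
      moreover have "r = r'"
      proof (intro ext)
        fix i j
        show "r i j = r' i j"
        proof (cases "(i, j) = p0")
          case True
          then show ?thesis using r r' by auto
        next
          case False
          then show ?thesis using fun_cong[OF fun_cong[OF h', of i], of j] by (simp add: updm_def)
        qed
      qed
      ultimately show "x = y" using xe ye by simp
    qed simp
  next
    fix x assume x: "x \<in> (supp_mats ?S0 :: 'a mat set) \<times> (UNIV :: 'a set)"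
    obtain r t where xe: "x = (r, t)" by fastforce
    then show "(case x of (r, t) \<Rightarrow> updm r p0 t) \<in> supp_mats S"
      using x p0 unfolding supp_mats_def updm_def by auto
  next
    fix y :: "'a mat" assume y: "y \<in> supp_mats S"
    define r where "r = updm y p0 0"
    have "r \<in> (supp_mats ?S0 :: 'a mat set)" using y unfolding r_def supp_mats_def updm_def by auto
    moreover have "y = updm r p0 (y (fst p0) (snd p0))"
      unfolding r_def updm_def by (auto intro!: ext)
    ultimately show "\<exists>x\<in>(supp_mats ?S0 :: 'a mat set) \<times> (UNIV :: 'a set). y = (case x of (r, t) \<Rightarrow> updm r p0 t)"
      by (intro bexI[of _ "(r, y (fst p0) (snd p0))"]) auto
  qed
  have nz: "nzc T (updm r p0 t) = nzc T r + (if t \<noteq> 0 then 1 else 0)" if r: "r \<in> (supp_mats ?S0 :: 'a mat set)" for r :: "'a mat" and t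
  proof -
    have rp0: "r (fst p0) (snd p0) = 0" using r unfolding supp_mats_def by (cases p0) auto
    have fin: "finite {(i, j) \<in> T. r i j \<noteq> 0}" using fT by (rule rev_finite_subset) auto
    show ?thesis
    proof (cases "t = 0")
      case True
      then have "updm r p0 t = r" using rp0 unfolding updm_def by (auto intro!: ext)
      then show ?thesis using True by simp
    next
      case False
      have "{(i, j) \<in> T. updm r p0 t i j \<noteq> 0} = insert p0 {(i, j) \<in> T. r i j \<noteq> 0}"
        using False p0 ST unfolding updm_def by auto
      moreover have "p0 \<notin> {(i, j) \<in> T. r i j \<noteq> 0}" using rp0 by (cases p0) auto
      ultimately show ?thesis using False fin unfolding nzc_def by simp
    qed
  qed
  have "(\<Sum>r\<in>(supp_mats S :: 'a mat set). c ^ nzc T r) =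
        (\<Sum>x\<in>(supp_mats ?S0 :: 'a mat set) \<times> (UNIV :: 'a set). c ^ nzc T (case x of (r, t) \<Rightarrow> updm r p0 t))"
    using sum.reindex_bij_betw[OF bij, of "\<lambda>r. c ^ nzc T r"] by simp
  also have "\<dots> = (\<Sum>r\<in>(supp_mats ?S0 :: 'a mat set). \<Sum>t\<in>(UNIV :: 'a set). c ^ nzc T (updm r p0 t))"
    by (subst sum.cartesian_product) (simp add: case_prod_unfold)
  also have "\<dots> = (\<Sum>r\<in>(supp_mats ?S0 :: 'a mat set). c ^ nzc T r * (\<Sum>t\<in>(UNIV :: 'a set). c ^ (if t \<noteq> 0 then 1 else 0)))"
  proof (rule sum.cong[OF refl])
    fix r :: "'a mat" assume r: "r \<in> (supp_mats ?S0 :: 'a mat set)"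
    show "(\<Sum>t\<in>(UNIV :: 'a set). c ^ nzc T (updm r p0 t)) = c ^ nzc T r * (\<Sum>t\<in>(UNIV :: 'a set). c ^ (if t \<noteq> 0 then 1 else 0))"
      unfolding sum_distrib_left by (rule sum.cong[OF refl]) (simp add: nz[OF r] power_add)
  qed
  also have "\<dots> = 0" unfolding sum_indicator_pow c by simp
  finally show ?thesis .
qed

lemma madd4_nz:
  fixes l e f r :: "('a::comm_monoid_add) mat"
  assumes l: "l \<in> supp_mats L" and e: "e \<in> supp_mats D" and f: "f \<in> supp_mats U" and r: "r \<in> supp_mats R"
    and d: "L \<inter> D = {}" "L \<inter> U = {}" "L \<inter> R = {}" "D \<inter> U = {}" "D \<inter> R = {}" "U \<inter> R = {}"
  shows "madd (madd (madd l e) f) r i j \<noteq> 0 \<longleftrightarrow> (l i j \<noteq> 0 \<or> e i j \<noteq> 0 \<or> f i j \<noteq> 0 \<or> r i j \<noteq> 0)"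
proof -
  have zl: "(i, j) \<notin> L \<Longrightarrow> l i j = 0" using l unfolding supp_mats_def by auto
  have ze: "(i, j) \<notin> D \<Longrightarrow> e i j = 0" using e unfolding supp_mats_def by auto
  have zf: "(i, j) \<notin> U \<Longrightarrow> f i j = 0" using f unfolding supp_mats_def by auto
  have zr: "(i, j) \<notin> R \<Longrightarrow> r i j = 0" using r unfolding supp_mats_def by auto
  have val: "madd (madd (madd l e) f) r i j = l i j + e i j + f i j + r i j" by (simp add: madd_def)
  show ?thesis
  proof (cases "(i, j) \<in> L")
    case True
    then have "(i, j) \<notin> D" "(i, j) \<notin> U" "(i, j) \<notin> R" using d by blast+
    then show ?thesis using val zl ze zf zr by simp
  next
    case nL: False
    show ?thesis
    proof (cases "(i, j) \<in> D")
      case True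
      then have "(i, j) \<notin> U" "(i, j) \<notin> R" using d by blast+
      then show ?thesis using nL val zl ze zf zr by simp
    next
      case nD: False
      show ?thesis
      proof (cases "(i, j) \<in> U")
        case True
        then have "(i, j) \<notin> R" using d by blast+
        then show ?thesis using nL nD val zl ze zf zr by simp
      next
        case False
        then show ?thesis using nL nD val zl ze zf zr by simp
      qed
    qed
  qed
qed

lemma madd4_supp:
  fixes l e f r :: "('a::comm_monoid_add) mat"
  assumes l: "l \<in> supp_mats L" and e: "e \<in> supp_mats D" and f: "f \<in> supp_mats U" and r: "r \<in> supp_mats R"
    and d: "L \<inter> D = {}" "L \<inter> U = {}" "L \<inter> R = {}" "D \<inter> U = {}" "D \<inter> R = {}" "U \<inter> R = {}"
  shows "madd (madd (madd l e) f) r \<in> supp_mats H \<longleftrightarrow>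
         (l \<in> supp_mats H \<and> e \<in> supp_mats H \<and> f \<in> supp_mats H \<and> r \<in> supp_mats H)"
  using madd4_nz[OF assms] unfolding supp_mats_def by auto

lemma supp_mats_inter: "supp_mats L \<inter> supp_mats H = supp_mats (L \<inter> H)"
  unfolding supp_mats_def by auto

lemma supp_mats_empty: "supp_mats {} = {(\<lambda>i j. 0)}"
  unfolding supp_mats_def by (auto intro!: ext)

lemma double_sum:
  fixes \<gamma> :: "('a::{finite,field}) mat \<Rightarrow> complex" and c :: complex
  assumes \<gamma>: "\<And>x. \<gamma> x = (if x \<in> supp_mats H then K else 0)"
    and e: "e \<in> supp_mats D" and f: "f \<in> supp_mats U"
    and d: "L \<inter> D = {}" "L \<inter> U = {}" "L \<inter> R = {}" "D \<inter> U = {}" "D \<inter> R = {}" "U \<inter> R = {}"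
    and fL: "finite L" and fR: "finite R"
    and c: "1 + (of_nat (card (UNIV :: 'a set)) - 1) * c = 0"
  shows "(\<Sum>l\<in>(supp_mats L :: 'a mat set). \<Sum>r\<in>(supp_mats R :: 'a mat set).
            c ^ nzc R r * \<gamma> (madd (madd (madd l e) f) r)) =
         (if e \<in> supp_mats H \<and> f \<in> supp_mats H \<and> R \<inter> H = {}
          then K * of_nat (card (UNIV :: 'a set)) ^ card (L \<inter> H) else 0)"
proof -
  let ?E = "e \<in> supp_mats H \<and> f \<in> supp_mats H"
  have fLH: "finite (L \<inter> H)" using fL by simp
  have fRH: "finite (R \<inter> H)" using fR by simp
  have step1: "(\<Sum>l\<in>(supp_mats L :: 'a mat set). \<Sum>r\<in>(supp_mats R :: 'a mat set).
            c ^ nzc R r * \<gamma> (madd (madd (madd l e) f) r)) =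
        (\<Sum>l\<in>(supp_mats L :: 'a mat set). \<Sum>r\<in>(supp_mats R :: 'a mat set).
            (if ?E then K else 0) * ((if l \<in> supp_mats H then 1 else 0) * (c ^ nzc R r * (if r \<in> supp_mats H then 1 else 0))))"
  proof (intro sum.cong refl)
    fix l r assume l: "l \<in> (supp_mats L :: 'a mat set)" and r: "r \<in> (supp_mats R :: 'a mat set)"
    show "c ^ nzc R r * \<gamma> (madd (madd (madd l e) f) r) =
      (if ?E then K else 0) * ((if l \<in> supp_mats H then 1 else 0) * (c ^ nzc R r * (if r \<in> supp_mats H then 1 else 0)))"
      unfolding \<gamma> madd4_supp[OF l e f r d] by auto
  qed
  also have "\<dots> = (if ?E then K else 0) * (\<Sum>l\<in>(supp_mats L :: 'a mat set). \<Sum>r\<in>(supp_mats R :: 'a mat set).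
            ((if l \<in> supp_mats H then 1 else 0) * (c ^ nzc R r * (if r \<in> supp_mats H then 1 else 0))))"
    by (simp only: sum_distrib_left)
  also have "\<dots> = (if ?E then K else 0) * ((\<Sum>l\<in>(supp_mats L :: 'a mat set). (if l \<in> supp_mats H then 1 else 0)) *
        (\<Sum>r\<in>(supp_mats R :: 'a mat set). c ^ nzc R r * (if r \<in> supp_mats H then 1 else 0)))"
    by (simp only: sum_product)
  also have "(\<Sum>l\<in>(supp_mats L :: 'a mat set). (if l \<in> supp_mats H then 1 else 0)) =
      (of_nat (card (supp_mats (L \<inter> H) :: 'a mat set)) :: complex)"
  proof -
    have "(\<Sum>l\<in>(supp_mats L :: 'a mat set). (if l \<in> supp_mats H then 1 else 0)) =
          (\<Sum>l\<in>(supp_mats L :: 'a mat set) \<inter> supp_mats H. (1::complex))"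
      using supp_mats_card[OF fL, where 'a='a] by (intro sum.inter_restrict[symmetric]) simp
    then show ?thesis by (simp add: supp_mats_inter)
  qed
  also have "card (supp_mats (L \<inter> H) :: 'a mat set) = card (UNIV :: 'a set) ^ card (L \<inter> H)"
    using supp_mats_card[OF fLH, where 'a='a] by simp
  also have "(\<Sum>r\<in>(supp_mats R :: 'a mat set). c ^ nzc R r * (if r \<in> supp_mats H then 1 else 0)) =
      (\<Sum>r\<in>(supp_mats (R \<inter> H) :: 'a mat set). c ^ nzc R r)"
  proof -
    have "(\<Sum>r\<in>(supp_mats R :: 'a mat set). c ^ nzc R r * (if r \<in> supp_mats H then 1 else 0)) =
          (\<Sum>r\<in>(supp_mats R :: 'a mat set) \<inter> supp_mats H. c ^ nzc R r)"
    proof -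
      have "(\<Sum>r\<in>(supp_mats R :: 'a mat set). c ^ nzc R r * (if r \<in> supp_mats H then 1 else 0)) =
         (\<Sum>r\<in>(supp_mats R :: 'a mat set). if r \<in> supp_mats H then c ^ nzc R r else 0)"
        by (rule sum.cong) auto
      also have "\<dots> = (\<Sum>r\<in>(supp_mats R :: 'a mat set) \<inter> supp_mats H. c ^ nzc R r)"
        using supp_mats_card[OF fR, where 'a='a] by (intro sum.inter_restrict[symmetric]) simp
      finally show ?thesis .
    qed
    then show ?thesis by (simp add: supp_mats_inter)
  qed
  also have "(\<Sum>r\<in>(supp_mats (R \<inter> H) :: 'a mat set). c ^ nzc R r) = (if R \<inter> H = {} then 1 else 0)"
  proof (cases "R \<inter> H = {}")
    case True
    have "nzc R (\<lambda>i j. 0 :: 'a) = 0" unfolding nzc_def by simp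
    then show ?thesis using True by (simp add: supp_mats_empty)
  next
    case False
    then obtain p0 where "p0 \<in> R \<inter> H" by blast
    then show ?thesis using sum_vanish[OF fR _ _ c, of "R \<inter> H" p0] False by auto
  qed
  finally show ?thesis by auto
qed

definition Dpos :: "nat \<Rightarrow> nat set \<Rightarrow> (nat \<times> nat) set" where
  "Dpos N A = {(i, j). i \<in> {1..N} - A \<and> i < j \<and> j \<le> cA N A i}"

definition Upos :: "nat \<Rightarrow> nat set \<Rightarrow> (nat \<times> nat) set" where
  "Upos N A = {(i, j). i \<in> A \<and> i < j \<and> cA N A i < j \<and> j \<le> N}"

lemma cnt_below:
  assumes A: "A \<subseteq> {1..n}" and i: "1 \<le> i" "i \<le> n"
  shows "card {a \<in> A. a < i} + card {b \<in> {1..n} - A. b < i} = i - 1"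
proof -
  have fA: "finite A" using A finite_subset by blast
  have "{1..<i} = {a \<in> A. a < i} \<union> {b \<in> {1..n} - A. b < i}" using A i by auto
  moreover have "{a \<in> A. a < i} \<inter> {b \<in> {1..n} - A. b < i} = {}" by auto
  ultimately have "card {1..<i} = card {a \<in> A. a < i} + card {b \<in> {1..n} - A. b < i}"
    using fA by (simp add: card_Un_disjoint)
  then show ?thesis by simp
qed

lemma cnt_split:
  fixes A :: "nat set"
  assumes fA: "finite A"
  shows "card {a \<in> A. a < i} + card {a \<in> A. i < a} + (if i \<in> A then 1 else 0) = card A"
proof -
  let ?X = "{a \<in> A. a < i}" and ?Y = "{a \<in> A. i < a}" and ?Z = "A \<inter> {i}"
  have fX: "finite ?X" "finite ?Y" "finite ?Z" using fA by auto
  have e: "A = (?X \<union> ?Y) \<union> ?Z" by auto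
  have c1: "card (?X \<union> ?Y) = card ?X + card ?Y" using fX by (intro card_Un_disjoint) auto
  have c2: "card ((?X \<union> ?Y) \<union> ?Z) = card (?X \<union> ?Y) + card ?Z" using fX by (intro card_Un_disjoint) auto
  have c3: "card ?Z = (if i \<in> A then 1 else 0)" by auto
  have "card A = card ((?X \<union> ?Y) \<union> ?Z)" using e by simp
  then show ?thesis using c1 c2 c3 by simp
qed

lemma card_B:
  assumes A: "A \<subseteq> {1..n}"
  shows "card ({1..n} - A) = n - card A"
  using A by (simp add: card_Diff_subset finite_subset)

lemma rowB:
  assumes A: "A \<subseteq> {1..n}" and i: "i \<in> {1..n} - A"
  shows "i = card {a \<in> A. a < i} + card {b \<in> {1..n} - A. b < i} + 1"
    and "cA n A i = (n - card A) + card {a \<in> A. a < i}"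
    and "card {b \<in> {1..n} - A. b < i} < n - card A"
    and "sorted_list_of_set ({1..n} - A) ! card {b \<in> {1..n} - A. b < i} = i"
proof -
  have fA: "finite A" using A finite_subset by blast
  show "i = card {a \<in> A. a < i} + card {b \<in> {1..n} - A. b < i} + 1"
    using cnt_below[OF A, of i] i by auto
  have h1: "card {a \<in> A. a < i} + card {a \<in> A. i < a} = card A" using cnt_split[OF fA, of i] i by simp
  have h2: "card A \<le> n" using card_mono[OF finite_atLeastAtMost A] by simp
  show "cA n A i = (n - card A) + card {a \<in> A. a < i}"
    unfolding cA_def using h1 h2 by arith
  show "card {b \<in> {1..n} - A. b < i} < n - card A"
    using sl_nth_card[of "{1..n} - A" i] i card_B[OF A] by simp
  show "sorted_list_of_set ({1..n} - A) ! card {b \<in> {1..n} - A. b < i} = i"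
    using sl_nth_card[of "{1..n} - A" i] i by simp
qed

lemma rowA:
  assumes A: "A \<subseteq> {1..n}" and i: "i \<in> A"
  shows "i = card {b \<in> {1..n} - A. b < i} + card {a \<in> A. a < i} + 1"
    and "cA n A i = (n - card A) + card {a \<in> A. a < i} + 1"
    and "card {a \<in> A. a < i} < card A"
    and "sorted_list_of_set A ! card {a \<in> A. a < i} = i"
    and "card {b \<in> {1..n} - A. b < i} \<le> n - card A"
proof -
  have fA: "finite A" using A finite_subset by blast
  have i1: "1 \<le> i" "i \<le> n" using A i by auto
  show "i = card {b \<in> {1..n} - A. b < i} + card {a \<in> A. a < i} + 1"
    using cnt_below[OF A i1] i1 by auto
  have h1: "card {a \<in> A. a < i} + card {a \<in> A. i < a} + 1 = card A" using cnt_split[OF fA, of i] i by simp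
  have h2: "card A \<le> n" using card_mono[OF finite_atLeastAtMost A] by simp
  show "cA n A i = (n - card A) + card {a \<in> A. a < i} + 1"
    unfolding cA_def using h1 h2 by arith
  show "card {a \<in> A. a < i} < card A" "sorted_list_of_set A ! card {a \<in> A. a < i} = i"
    using sl_nth_card[OF fA i] by simp_all
  have "card {b \<in> {1..n} - A. b < i} \<le> card ({1..n} - A)" by (rule card_mono) auto
  then show "card {b \<in> {1..n} - A. b < i} \<le> n - card A" using card_B[OF A] by simp
qed

definition sA :: "nat set \<Rightarrow> nat \<Rightarrow> nat" where "sA A i = card {a \<in> A. a < i}"
definition sB :: "nat \<Rightarrow> nat set \<Rightarrow> nat \<Rightarrow> nat" where "sB n A i = card {b \<in> {1..n} - A. b < i}"

definition phiD :: "nat set \<Rightarrow> nat \<times> nat \<Rightarrow> nat \<times> nat" where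
  "phiD A = (\<lambda>(i, j). (i - sA A i, j - sA A i))"

definition psiU :: "nat \<Rightarrow> nat set \<Rightarrow> nat \<times> nat \<Rightarrow> nat \<times> nat" where
  "psiU n A = (\<lambda>(i, j). (i - sB n A i, j - (n - card A)))"

context
  fixes n :: nat and A :: "nat set"
  assumes A: "A \<subseteq> {1..n}"
begin

lemma fA: "finite A" using A finite_subset by blast

lemma rowB': 
  assumes i: "i \<in> {1..n} - A"
  shows "i = sA A i + sB n A i + 1" "cA n A i = (n - card A) + sA A i" "sB n A i < n - card A"
    "sorted_list_of_set ({1..n} - A) ! sB n A i = i"
  using rowB[OF A i] unfolding sA_def sB_def by simp_all

lemma rowA':
  assumes i: "i \<in> A"
  shows "i = sB n A i + sA A i + 1" "cA n A i = (n - card A) + sA A i + 1" "sA A i < card A"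
    "sorted_list_of_set A ! sA A i = i" "sB n A i \<le> n - card A"
  using rowA[OF A i] unfolding sA_def sB_def by simp_all

lemma cardB: "card ({1..n} - A) = n - card A" using card_B[OF A] .

lemma sB_nth:
  assumes k: "k < n - card A"
  shows "sorted_list_of_set ({1..n} - A) ! k \<in> {1..n} - A"
    "sB n A (sorted_list_of_set ({1..n} - A) ! k) = k"
  using sl_mem[of "{1..n} - A" k] sl_card_less[of "{1..n} - A" k] k cardB unfolding sB_def by simp_all

lemma sA_nth:
  assumes k: "k < card A"
  shows "sorted_list_of_set A ! k \<in> A"
    "sA A (sorted_list_of_set A ! k) = k"
  using sl_mem[OF fA k] sl_card_less[OF fA k] unfolding sA_def by simp_all

lemma phiD_bij: "bij_betw (phiD A) (Dpos n A) (Pn (n - card A))"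
proof (rule bij_betwI')
  fix x y assume x: "x \<in> Dpos n A" and y: "y \<in> Dpos n A"
  obtain i j where xe: "x = (i, j)" by fastforce
  obtain i' j' where ye: "y = (i', j')" by fastforce
  have i: "i \<in> {1..n} - A" "i < j" using x xe by (auto simp: Dpos_def)
  have i': "i' \<in> {1..n} - A" "i' < j'" using y ye by (auto simp: Dpos_def)
  show "(phiD A x = phiD A y) = (x = y)"
  proof
    assume "phiD A x = phiD A y"
    then have e1: "i - sA A i = i' - sA A i'" and e2: "j - sA A i = j' - sA A i'"
      using xe ye by (auto simp: phiD_def)
    have "sB n A i = sB n A i'" using e1 rowB'(1)[OF i(1)] rowB'(1)[OF i'(1)] by linarith
    then have "i = i'" using rowB'(4)[OF i(1)] rowB'(4)[OF i'(1)] by metis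
    moreover have "j = j'" using e2 \<open>i = i'\<close> i i' rowB'(1)[OF i(1)] by (simp add: less_imp_le)
    ultimately show "x = y" using xe ye by simp
  qed simp
next
  fix x assume x: "x \<in> Dpos n A"
  obtain i j where xe: "x = (i, j)" by fastforce
  have i: "i \<in> {1..n} - A" "i < j" "j \<le> cA n A i" using x xe by (auto simp: Dpos_def)
  show "phiD A x \<in> Pn (n - card A)"
    using xe i rowB'[OF i(1)] by (auto simp: phiD_def Pn_def)
next
  fix y assume y: "y \<in> Pn (n - card A)"
  obtain k l where ye: "y = (k, l)" by fastforce
  have kl: "1 \<le> k" "k < l" "l \<le> n - card A" using y ye by (auto simp: Pn_def)
  define i where "i = sorted_list_of_set ({1..n} - A) ! (k - 1)"
  have i: "i \<in> {1..n} - A" "sB n A i = k - 1" using sB_nth[of "k - 1"] kl unfolding i_def by auto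
  define j where "j = l + sA A i"
  have "(i, j) \<in> Dpos n A" using rowB'[OF i(1)] i kl unfolding Dpos_def j_def by auto
  moreover have "y = phiD A (i, j)" using rowB'[OF i(1)] i kl ye unfolding phiD_def j_def by auto
  ultimately show "\<exists>x\<in>Dpos n A. y = phiD A x" by blast
qed

lemma psiU_bij: "bij_betw (psiU n A) (Upos n A) (Pn (card A))"
proof (rule bij_betwI')
  fix x y assume x: "x \<in> Upos n A" and y: "y \<in> Upos n A"
  obtain i j where xe: "x = (i, j)" by fastforce
  obtain i' j' where ye: "y = (i', j')" by fastforce
  have i: "i \<in> A" "cA n A i < j" using x xe by (auto simp: Upos_def)
  have i': "i' \<in> A" "cA n A i' < j'" using y ye by (auto simp: Upos_def)
  show "(psiU n A x = psiU n A y) = (x = y)"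
  proof
    assume "psiU n A x = psiU n A y"
    then have e1: "i - sB n A i = i' - sB n A i'" and e2: "j - (n - card A) = j' - (n - card A)"
      using xe ye by (auto simp: psiU_def)
    have "sA A i = sA A i'" using e1 rowA'(1)[OF i(1)] rowA'(1)[OF i'(1)] by linarith
    then have "i = i'" using rowA'(4)[OF i(1)] rowA'(4)[OF i'(1)] by metis
    moreover have "j = j'" using e2 i i' rowA'(2)[OF i(1)] rowA'(2)[OF i'(1)] by linarith
    ultimately show "x = y" using xe ye by simp
  qed simp
next
  fix x assume x: "x \<in> Upos n A"
  obtain i j where xe: "x = (i, j)" by fastforce
  have i: "i \<in> A" "i < j" "cA n A i < j" "j \<le> n" using x xe by (auto simp: Upos_def)
  have "card A \<le> n" using card_mono[OF finite_atLeastAtMost A] by simp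
  then show "psiU n A x \<in> Pn (card A)"
    using xe i rowA'[OF i(1)] by (auto simp: psiU_def Pn_def)
next
  fix y assume y: "y \<in> Pn (card A)"
  obtain k l where ye: "y = (k, l)" by fastforce
  have kl: "1 \<le> k" "k < l" "l \<le> card A" using y ye by (auto simp: Pn_def)
  have cn: "card A \<le> n" using card_mono[OF finite_atLeastAtMost A] by simp
  define i where "i = sorted_list_of_set A ! (k - 1)"
  have i: "i \<in> A" "sA A i = k - 1" using sA_nth[of "k - 1"] kl unfolding i_def by auto
  define j where "j = l + (n - card A)"
  have ij: "i < j" "cA n A i < j" "j \<le> n" using rowA'[OF i(1)] i(2) kl cn unfolding j_def by arith+
  have "(i, j) \<in> Upos n A" using ij i(1) unfolding Upos_def by simp
  moreover have "y = psiU n A (i, j)" using rowA'[OF i(1)] i kl ye cn unfolding psiU_def j_def by auto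
  ultimately show "\<exists>x\<in>Upos n A. y = psiU n A x" by blast
qed

end

lemma arithU:
  fixes t s j i iota m r n :: nat
  assumes "i = t + s + 1" "m + s + 1 < j" "j \<le> n" "n = m + r" "s < r" "t \<le> m" "iota \<le> n - i"
  shows "(j - m - (s+1) \<le> r - (s+1) - min (n - i - iota) (r - (s+1))) \<longleftrightarrow> j - i \<le> iota"
proof -
  obtain k where k: "j = Suc (m + s + 1 + k)" using assms(2) less_iff_Suc_add by blast
  define d where "d = Suc k"
  have d: "j = m + s + 1 + d" "d \<ge> 1" using k unfolding d_def by simp_all
  obtain e where e: "m = t + e" using assms(6) le_Suc_ex by blast
  obtain f where f0: "r = Suc (s + f)" using assms(5) less_iff_Suc_add by blast
  then have f: "r = s + 1 + f" by simp
  have n: "n = t + e + s + 1 + f" using assms(4) e f by simp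
  have i1: "j - m - (s+1) = d" using d by simp
  have i2: "r - (s+1) = f" using f by simp
  have i3: "n - i = e + f" using n assms(1) by simp
  have i4: "j - i = e + d" using d e assms(1) by simp
  have io: "iota \<le> e + f" using assms(7) i3 by simp
  show ?thesis
  proof (cases "e \<le> iota")
    case True
    then have "min (e + f - iota) f = e + f - iota" by simp
    then show ?thesis unfolding i1 i2 i3 i4 using True io by (simp add: le_diff_conv2 ac_simps)
  next
    case False
    then have "min (e + f - iota) f = f" by simp
    then show ?thesis unfolding i1 i2 i3 i4 using False d by simp
  qed
qed
lemma arithR1:
  fixes iota i sA sB M C n :: nat
  assumes "n = M + C" "sA \<le> C" "\<not> (M + sA < n)" "i = sA + sB + 1" "iota \<le> n - i" "sB < M"
  shows "iota \<le> M - sB - 1"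
proof -
  have "sA = C" using assms(1,2,3) by linarith
  obtain f where f: "M = Suc (sB + f)" using assms(6) less_iff_Suc_add by blast
  have "n - i = f" using assms(1,4) f \<open>sA = C\<close> by simp
  moreover have "M - sB - 1 = f" using f by simp
  ultimately show ?thesis using assms(5) by simp
qed

lemma arithR2:
  fixes iota i j sA sB M :: nat
  assumes "j - i \<le> iota" "M + sA < j" "i = sA + sB + 1" "sB < M" "iota \<le> M - sB - 1"
  shows False
proof -
  obtain f where f: "M = Suc (sB + f)" using assms(4) less_iff_Suc_add by blast
  obtain k where k: "j = Suc (M + sA + k)" using assms(2) less_iff_Suc_add by blast
  have "j - i = Suc (f + k)" using k f assms(3) by simp
  moreover have "M - sB - 1 = f" using f by simp
  ultimately show False using assms(1,5) by simp
qed

lemma arithR3: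
  fixes iota i j sA sB M :: nat
  assumes "j = M + sA + 1" "i = sA + sB + 1" "sB < M" "\<not> iota \<le> M - sB - 1"
  shows "i < j" "j - i \<le> iota"
proof -
  obtain f where f: "M = Suc (sB + f)" using assms(3) less_iff_Suc_add by blast
  show "i < j" using assms(1,2) f by simp
  have "j - i = Suc f" using assms(1,2) f by simp
  moreover have "M - sB - 1 = f" using f by simp
  ultimately show "j - i \<le> iota" using assms(4) by simp
qed

context
  fixes n :: nat and A :: "nat set" and w :: "nat \<Rightarrow> nat"
  assumes A: "A \<subseteq> {1..n}" and w: "w permutes {1..n}"
begin

lemma sA_le: "sA A i \<le> card A"
  unfolding sA_def using fA[OF A] by (intro card_mono) auto

lemma cardA_le: "card A \<le> n" using card_mono[OF finite_atLeastAtMost A] by simp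

lemma tab_iff:
  "is_inv_table (n - card A) (restrict_seq (inv_tab n w) ({1..n} - A)) \<longleftrightarrow>
   (\<forall>i\<in>{1..n} - A. inv_tab n w i \<le> n - card A - sB n A i - 1)"
proof
  assume h: "is_inv_table (n - card A) (restrict_seq (inv_tab n w) ({1..n} - A))"
  show "\<forall>i\<in>{1..n} - A. inv_tab n w i \<le> n - card A - sB n A i - 1"
  proof
    fix i assume i: "i \<in> {1..n} - A"
    have k: "sB n A i + 1 \<in> {1..n - card A}" using rowB'[OF A i] by auto
    have "restrict_seq (inv_tab n w) ({1..n} - A) (sB n A i + 1) \<le> n - card A - (sB n A i + 1)"
      using h k unfolding is_inv_table_def by blast
    then show "inv_tab n w i \<le> n - card A - sB n A i - 1"
      using rowB'(4)[OF A i] unfolding restrict_seq_def by simp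
  qed
next
  assume h: "\<forall>i\<in>{1..n} - A. inv_tab n w i \<le> n - card A - sB n A i - 1"
  show "is_inv_table (n - card A) (restrict_seq (inv_tab n w) ({1..n} - A))"
    unfolding is_inv_table_def
  proof
    fix k assume k: "k \<in> {1..n - card A}"
    define i where "i = sorted_list_of_set ({1..n} - A) ! (k - 1)"
    have km: "k - 1 < n - card A" using k by auto
    have i: "i \<in> {1..n} - A" "sB n A i = k - 1" using sB_nth[OF A km] unfolding i_def by auto
    have "inv_tab n w i \<le> n - card A - sB n A i - 1" using h i by blast
    then show "restrict_seq (inv_tab n w) ({1..n} - A) k \<le> n - card A - k"
      using i k unfolding restrict_seq_def i_def by auto
  qed
qed

lemma R_empty_iff:
  "R_pos n A \<inter> Hs n w = {} \<longleftrightarrow>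
   is_inv_table (n - card A) (restrict_seq (inv_tab n w) ({1..n} - A))"
  unfolding tab_iff
proof
  assume h: "R_pos n A \<inter> Hs n w = {}"
  show "\<forall>i\<in>{1..n} - A. inv_tab n w i \<le> n - card A - sB n A i - 1"
  proof (rule ballI, rule ccontr)
    fix i assume i: "i \<in> {1..n} - A" and c: "\<not> inv_tab n w i \<le> n - card A - sB n A i - 1"
    have r: "i = sA A i + sB n A i + 1" "cA n A i = (n - card A) + sA A i" "sB n A i < n - card A"
      using rowB'[OF A i] by auto
    have le: "inv_tab n w i \<le> n - i" by (rule inv_tab_le[OF w])
    have s: "sA A i \<le> card A" by (rule sA_le)
    have cn: "card A \<le> n" by (rule cardA_le)
    show False
    proof (cases "(n - card A) + sA A i < n")
      case True
      define j where "j = (n - card A) + sA A i + 1"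
      have a3: "i < j" "j - i \<le> inv_tab n w i" using arithR3[OF j_def r(1) r(3) c] by auto
      have "(i, j) \<in> R_pos n A" using i r True a3 unfolding R_pos_def j_def by auto
      moreover have "(i, j) \<in> Hs n w" using i r True a3 unfolding Hs_def j_def by auto
      ultimately show False using h by blast
    next
      case False
      have "inv_tab n w i \<le> n - card A - sB n A i - 1"
        using arithR1[of n "n - card A" "card A" "sA A i" i "sB n A i" "inv_tab n w i"] False cn s r le by simp
      then show False using c by simp
    qed
  qed
next
  assume h: "\<forall>i\<in>{1..n} - A. inv_tab n w i \<le> n - card A - sB n A i - 1"
  show "R_pos n A \<inter> Hs n w = {}"
  proof (rule ccontr)
    assume "R_pos n A \<inter> Hs n w \<noteq> {}"
    then obtain i j where ij: "(i, j) \<in> R_pos n A" "(i, j) \<in> Hs n w" by auto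
    have i: "i \<in> {1..n} - A" "cA n A i < j" using ij(1) unfolding R_pos_def by auto
    have j: "j - i \<le> inv_tab n w i" "i < j" using ij(2) unfolding Hs_def by auto
    have r: "i = sA A i + sB n A i + 1" "cA n A i = (n - card A) + sA A i" "sB n A i < n - card A"
      using rowB'[OF A i(1)] by auto
    have "inv_tab n w i \<le> n - card A - sB n A i - 1" using h i by blast
    then show False using arithR2[of j i "inv_tab n w i" "n - card A" "sA A i" "sB n A i"] i j r by simp
  qed
qed

lemma D_H:
  assumes tab: "is_inv_table (n - card A) (restrict_seq (inv_tab n w) ({1..n} - A))"
    and p: "p \<in> Dpos n A"
  shows "p \<in> Hs n w \<longleftrightarrow>
    phiD A p \<in> Hs (n - card A) (perm_of_inv_table (n - card A) (restrict_seq (inv_tab n w) ({1..n} - A)))"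
proof -
  let ?y = "perm_of_inv_table (n - card A) (restrict_seq (inv_tab n w) ({1..n} - A))"
  obtain i j where pe: "p = (i, j)" by fastforce
  have i: "i \<in> {1..n} - A" "i < j" "j \<le> cA n A i" using p pe unfolding Dpos_def by auto
  have r: "i = sA A i + sB n A i + 1" "cA n A i = (n - card A) + sA A i" "sB n A i < n - card A"
    "sorted_list_of_set ({1..n} - A) ! sB n A i = i"
    using rowB'[OF A i(1)] by auto
  have k: "sB n A i + 1 \<in> {1..n - card A}" using r by auto
  have yt: "inv_tab (n - card A) ?y (sB n A i + 1) = inv_tab n w i"
    using perm_of_inv_table[OF tab] k r(4) unfolding restrict_seq_def by auto
  have cn: "card A \<le> n" by (rule cardA_le)
  have phi: "phiD A p = (sB n A i + 1, j - sA A i)" using pe r(1) unfolding phiD_def by auto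
  have sle: "sA A i \<le> card A" by (rule sA_le)
  have "p \<in> Hs n w \<longleftrightarrow> j - i \<le> inv_tab n w i" using pe i r cn sle unfolding Hs_def by auto
  moreover have "phiD A p \<in> Hs (n - card A) ?y \<longleftrightarrow> j - sA A i - (sB n A i + 1) \<le> inv_tab n w i"
    using phi i r yt unfolding Hs_def by auto
  moreover have "j - sA A i - (sB n A i + 1) = j - i" using r(1) by simp
  ultimately show ?thesis by simp
qed

lemma U_H:
  assumes p: "p \<in> Upos n A"
  shows "p \<in> Hs n w \<longleftrightarrow>
    psiU n A p \<in> Hs (card A) (perm_of_dual_inv_table (card A)
            (\<lambda>j. min (dual_inv_tab n w (sorted_list_of_set A ! (j - 1))) (card A - j)))"
proof -
  let ?c = "\<lambda>j. min (dual_inv_tab n w (sorted_list_of_set A ! (j - 1))) (card A - j)"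
  let ?u = "perm_of_dual_inv_table (card A) ?c"
  have cc: "\<forall>k\<in>{1..card A}. ?c k \<le> card A - k" by auto
  obtain i j where pe: "p = (i, j)" by fastforce
  have i: "i \<in> A" "i < j" "cA n A i < j" "j \<le> n" using p pe unfolding Upos_def by auto
  have r: "i = sB n A i + sA A i + 1" "cA n A i = (n - card A) + sA A i + 1" "sA A i < card A"
    "sorted_list_of_set A ! sA A i = i" "sB n A i \<le> n - card A"
    using rowA'[OF A i(1)] by auto
  have k: "sA A i + 1 \<in> {1..card A}" using r by auto
  have ut: "inv_tab (card A) ?u (sA A i + 1) = card A - (sA A i + 1) - ?c (sA A i + 1)"
    using perm_of_dual_inv_table[OF cc] k by blast
  have ct: "?c (sA A i + 1) = min (n - i - inv_tab n w i) (card A - (sA A i + 1))"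
    using r(4) unfolding dual_inv_tab_def by simp
  have cn: "card A \<le> n" by (rule cardA_le)
  have le: "inv_tab n w i \<le> n - i" by (rule inv_tab_le[OF w])
  have psi: "psiU n A p = (sA A i + 1, j - (n - card A))" using pe r(1) unfolding psiU_def by auto
  have "p \<in> Hs n w \<longleftrightarrow> j - i \<le> inv_tab n w i" using pe i r cn A unfolding Hs_def by auto
  moreover have "psiU n A p \<in> Hs (card A) ?u \<longleftrightarrow>
      j - (n - card A) - (sA A i + 1) \<le> card A - (sA A i + 1) - min (n - i - inv_tab n w i) (card A - (sA A i + 1))"
  proof -
    have b1: "sA A i + 1 < j - (n - card A)" using i(3) r(2) by linarith
    have b2: "j - (n - card A) \<le> card A" using i(4) cn by linarith
    have "psiU n A p \<in> Hs (card A) ?u \<longleftrightarrow>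
       j - (n - card A) - (sA A i + 1) \<le> inv_tab (card A) ?u (sA A i + 1)"
      unfolding psi Hs_def using b1 b2 by simp
    then show ?thesis unfolding ut ct .
  qed
  moreover have "(j - (n - card A) - (sA A i + 1) \<le> card A - (sA A i + 1) - min (n - i - inv_tab n w i) (card A - (sA A i + 1)))
      \<longleftrightarrow> j - i \<le> inv_tab n w i"
    using arithU[of i "sB n A i" "sA A i" "n - card A" j n "card A" "inv_tab n w i"] i r cn le by simp
  ultimately show ?thesis by simp
qed

end

lemma transfer:
  fixes phi :: "nat \<times> nat \<Rightarrow> nat \<times> nat" and u :: "('a::zero) mat"
  assumes bij: "bij_betw phi D P'" and Q: "Q \<subseteq> P'" and corr: "\<forall>p\<in>D. p \<in> H \<longleftrightarrow> phi p \<in> Q"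
    and u: "u \<in> supp_mats P'"
  shows "(\<lambda>i j. if (i, j) \<in> D then u (fst (phi (i, j))) (snd (phi (i, j))) else 0) \<in> supp_mats H
         \<longleftrightarrow> u \<in> supp_mats Q"
proof
  assume h: "(\<lambda>i j. if (i, j) \<in> D then u (fst (phi (i, j))) (snd (phi (i, j))) else 0) \<in> supp_mats H"
  show "u \<in> supp_mats Q" unfolding supp_mats_def
  proof (intro CollectI allI impI)
    fix k l assume nz: "u k l \<noteq> 0"
    then have "(k, l) \<in> P'" using u unfolding supp_mats_def by auto
    then obtain p where p: "p \<in> D" "phi p = (k, l)" using bij unfolding bij_betw_def by (metis imageE)
    obtain i j where pe: "p = (i, j)" by fastforce
    have "(if (i, j) \<in> D then u (fst (phi (i, j))) (snd (phi (i, j))) else 0) \<noteq> 0"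
      using p pe nz by simp
    then have "(i, j) \<in> H" using h unfolding supp_mats_def by blast
    then show "(k, l) \<in> Q" using corr p pe by auto
  qed
next
  assume h: "u \<in> supp_mats Q"
  show "(\<lambda>i j. if (i, j) \<in> D then u (fst (phi (i, j))) (snd (phi (i, j))) else 0) \<in> supp_mats H"
    unfolding supp_mats_def
  proof (intro CollectI allI impI)
    fix i j assume nz: "(if (i, j) \<in> D then u (fst (phi (i, j))) (snd (phi (i, j))) else 0) \<noteq> 0"
    then have ij: "(i, j) \<in> D" by (cases "(i, j) \<in> D") auto
    then have "u (fst (phi (i, j))) (snd (phi (i, j))) \<noteq> 0" using nz by simp
    then have "(fst (phi (i, j)), snd (phi (i, j))) \<in> Q" using h unfolding supp_mats_def by blast
    then have "phi (i, j) \<in> Q" by simp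
    then show "(i, j) \<in> H" using corr ij by blast
  qed
qed

lemma transfer_card:
  assumes bij: "bij_betw phi D P'" and Q: "Q \<subseteq> P'" and corr: "\<forall>p\<in>D. p \<in> H \<longleftrightarrow> phi p \<in> Q"
  shows "card (D \<inter> H) = card Q"
proof -
  have "phi ` (D \<inter> H) = Q"
  proof
    show "phi ` (D \<inter> H) \<subseteq> Q" using corr by auto
    show "Q \<subseteq> phi ` (D \<inter> H)"
    proof
      fix y assume y: "y \<in> Q"
      then have "y \<in> P'" using Q by auto
      then obtain p where p: "p \<in> D" "phi p = y" using bij unfolding bij_betw_def by (metis imageE)
      then have "p \<in> H" using corr y by auto
      then show "y \<in> phi ` (D \<inter> H)" using p by auto
    qed
  qed
  moreover have "inj_on phi (D \<inter> H)" using bij unfolding bij_betw_def by (auto intro: inj_on_subset)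
  ultimately show ?thesis using card_image by fastforce
qed

lemma card_field_ge2: "card (UNIV :: ('a::{finite,field}) set) \<ge> 2"
proof -
  have "card {0 :: 'a, 1} = 2" by simp
  moreover have "card {0 :: 'a, 1} \<le> card (UNIV :: 'a set)" by (rule card_mono) auto
  ultimately show ?thesis by simp
qed

lemma pow_eq:
  fixes q :: complex
  assumes "q \<noteq> 0" "b + d + f + h = a + c + e + g"
  shows "(1 / q) ^ a * (q ^ b / q ^ c * q ^ d) = q ^ e / q ^ f * (q ^ g / q ^ h)"
proof -
  have l: "(1 / q) ^ a * (q ^ b / q ^ c * q ^ d) = q ^ (b + d) / q ^ (a + c)"
    using assms(1) by (simp add: power_add power_one_over field_simps)
  have r: "q ^ e / q ^ f * (q ^ g / q ^ h) = q ^ (e + g) / q ^ (f + h)"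
    using assms(1) by (simp add: power_add field_simps)
  have "q ^ (b + d) * q ^ (f + h) = q ^ (e + g) * q ^ (a + c)"
    unfolding power_add[symmetric] using assms(2) by (simp add: ac_simps)
  then show ?thesis unfolding l r using assms(1) by (simp add: frac_eq_eq)
qed

lemma embed_dual_eq:
  "embed_dual N A u' = (\<lambda>i j. if (i, j) \<in> Dpos N A then u' (fst (phiD A (i, j))) (snd (phiD A (i, j))) else 0)"
  unfolding embed_dual_def Dpos_def phiD_def sA_def by (auto intro!: ext)

lemma embed_A_eq:
  "embed_A N A u = (\<lambda>i j. if (i, j) \<in> Upos N A then u (fst (psiU N A (i, j))) (snd (psiU N A (i, j))) else 0)"
  unfolding embed_A_def Upos_def psiU_def sB_def by (auto intro!: ext)

lemma embed_dual_supp: "embed_dual N A u' \<in> supp_mats (Dpos N A)"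
  unfolding embed_dual_eq supp_mats_def by auto

lemma embed_A_supp: "embed_A N A u \<in> supp_mats (Upos N A)"
  unfolding embed_A_eq supp_mats_def by auto

context
  fixes n :: nat and A :: "nat set"
  assumes A: "A \<subseteq> {1..n}"
begin

lemma cA_le: "cA n A i \<le> n" unfolding cA_def by simp

lemma decomp: "Pn n = L_pos n A \<union> Dpos n A \<union> Upos n A \<union> R_pos n A"
proof
  show "Pn n \<subseteq> L_pos n A \<union> Dpos n A \<union> Upos n A \<union> R_pos n A"
    unfolding Pn_def L_pos_def Dpos_def Upos_def R_pos_def by auto
  show "L_pos n A \<union> Dpos n A \<union> Upos n A \<union> R_pos n A \<subseteq> Pn n"
    unfolding Pn_def L_pos_def Dpos_def Upos_def R_pos_def using A cA_le
    by (auto intro: le_trans)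
qed

lemma disj:
  "L_pos n A \<inter> Dpos n A = {}" "L_pos n A \<inter> Upos n A = {}" "L_pos n A \<inter> R_pos n A = {}"
  "Dpos n A \<inter> Upos n A = {}" "Dpos n A \<inter> R_pos n A = {}" "Upos n A \<inter> R_pos n A = {}"
  unfolding L_pos_def Dpos_def Upos_def R_pos_def by auto

lemma fin4: "finite (L_pos n A)" "finite (Dpos n A)" "finite (Upos n A)" "finite (R_pos n A)"
  using decomp finite_Pn[of n] by (metis finite_Un)+

lemma card4: "card (Pn n) = card (L_pos n A) + card (Dpos n A) + card (Upos n A) + card (R_pos n A)"
proof -
  have "card (L_pos n A \<union> Dpos n A \<union> Upos n A \<union> R_pos n A) =
        card (L_pos n A \<union> Dpos n A \<union> Upos n A) + card (R_pos n A)"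
    using fin4 disj by (intro card_Un_disjoint) auto
  also have "card (L_pos n A \<union> Dpos n A \<union> Upos n A) = card (L_pos n A \<union> Dpos n A) + card (Upos n A)"
    using fin4 disj by (intro card_Un_disjoint) auto
  also have "card (L_pos n A \<union> Dpos n A) = card (L_pos n A) + card (Dpos n A)"
    using fin4 disj by (intro card_Un_disjoint) auto
  finally show ?thesis using decomp by simp
qed

lemma cardH:
  assumes HR: "R_pos n A \<inter> H = {}" and HP: "H \<subseteq> Pn n"
  shows "card H = card (L_pos n A \<inter> H) + card (Dpos n A \<inter> H) + card (Upos n A \<inter> H)"
proof -
  have e: "H = (L_pos n A \<inter> H) \<union> (Dpos n A \<inter> H) \<union> (Upos n A \<inter> H)"
    using HR HP decomp by blast
  have f: "finite (L_pos n A \<inter> H)" "finite (Dpos n A \<inter> H)" "finite (Upos n A \<inter> H)" using fin4 by auto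
  have "card ((L_pos n A \<inter> H) \<union> (Dpos n A \<inter> H) \<union> (Upos n A \<inter> H)) =
        card ((L_pos n A \<inter> H) \<union> (Dpos n A \<inter> H)) + card (Upos n A \<inter> H)"
    using f disj by (intro card_Un_disjoint) auto
  also have "card ((L_pos n A \<inter> H) \<union> (Dpos n A \<inter> H)) = card (L_pos n A \<inter> H) + card (Dpos n A \<inter> H)"
    using f disj by (intro card_Un_disjoint) auto
  finally show ?thesis using e by simp
qed

end

lemma per_A:
  fixes u' u :: "('a::{finite,field}) mat"
  assumes w: "w permutes {1..n}" and A: "A \<subseteq> {1..n}"
    and u': "u' \<in> ut (n - card A)" and u: "u \<in> ut (card A)"
  shows "Dela n A (barchi n w) (u', u) =
    (if is_inv_table (n - card A) (restrict_seq (inv_tab n w) ({1..n} - A))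
     then barchi (n - card A) (perm_of_inv_table (n - card A) (restrict_seq (inv_tab n w) ({1..n} - A))) u'
        * barchi (card A) (perm_of_dual_inv_table (card A)
            (\<lambda>j. min (dual_inv_tab n w (sorted_list_of_set A ! (j - 1))) (card A - j))) u
     else 0)"
proof -
  let ?q = "of_nat (card (UNIV :: 'a set)) :: complex"
  let ?H = "Hs n w"
  let ?K = "?q ^ card (Pn n) / ?q ^ card ?H"
  let ?L = "L_pos n A" and ?D = "Dpos n A" and ?U = "Upos n A" and ?R = "R_pos n A"
  let ?m = "n - card A" and ?r = "card A"
  let ?tab = "is_inv_table ?m (restrict_seq (inv_tab n w) ({1..n} - A))"
  let ?y = "perm_of_inv_table ?m (restrict_seq (inv_tab n w) ({1..n} - A))"
  let ?uA = "perm_of_dual_inv_table ?r (\<lambda>j. min (dual_inv_tab n w (sorted_list_of_set A ! (j - 1))) (?r - j))"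
  let ?e = "embed_dual n A u'" and ?f = "embed_A n A u"
  have q2: "card (UNIV :: 'a set) \<ge> 2" by (rule card_field_ge2)
  have qnz: "?q \<noteq> 0" using q2 by simp
  have q1: "?q - 1 \<noteq> 0"
  proof
    assume "?q - 1 = 0"
    then have "?q = of_nat 1" by simp
    then have "card (UNIV :: 'a set) = 1" using of_nat_eq_iff by blast
    then show False using q2 by simp
  qed
  have c: "1 + (?q - 1) * (- 1 / (?q - 1)) = 0" using q1 by (simp add: field_simps)
  have \<gamma>: "\<And>x :: 'a mat. barchi n w x = (if x \<in> supp_mats ?H then ?K else 0)"
    by (rule barchi_eq)
  have ds: "(\<Sum>l\<in>(supp_mats ?L :: 'a mat set). \<Sum>r\<in>(supp_mats ?R :: 'a mat set).
            (- 1 / (?q - 1)) ^ nzc ?R r * barchi n w (madd (madd (madd l ?e) ?f) r)) =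
         (if ?e \<in> supp_mats ?H \<and> ?f \<in> supp_mats ?H \<and> ?R \<inter> ?H = {}
          then ?K * ?q ^ card (?L \<inter> ?H) else 0)"
    by (rule double_sum[OF \<gamma> embed_dual_supp embed_A_supp disj[OF A] fin4(1)[OF A] fin4(4)[OF A] c])
  have dela: "Dela n A (barchi n w) (u', u) = (1 / ?q) ^ (card ?L + card ?R) *
      (if ?e \<in> supp_mats ?H \<and> ?f \<in> supp_mats ?H \<and> ?R \<inter> ?H = {}
          then ?K * ?q ^ card (?L \<inter> ?H) else 0)"
    unfolding ds[symmetric] Dela_def nzc_def by (simp add: power_one_over)
  show ?thesis
  proof (cases ?tab)
    case False
    then have "?R \<inter> ?H \<noteq> {}" using R_empty_iff[OF A w] by blast
    then show ?thesis unfolding dela using False by simp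
  next
    case True
    have RH: "?R \<inter> ?H = {}" using R_empty_iff[OF A w] True by blast
    have e1: "?e \<in> supp_mats ?H \<longleftrightarrow> u' \<in> supp_mats (Hs ?m ?y)"
      unfolding embed_dual_eq
      by (rule transfer[OF phiD_bij[OF A] Hs_sub]) (use D_H[OF A w True] u' ut_eq in auto)
    have e2: "?f \<in> supp_mats ?H \<longleftrightarrow> u \<in> supp_mats (Hs ?r ?uA)"
      unfolding embed_A_eq
      by (rule transfer[OF psiU_bij[OF A] Hs_sub]) (use U_H[OF A w] u ut_eq in auto)
    have cD: "card (?D \<inter> ?H) = card (Hs ?m ?y)"
      by (rule transfer_card[OF phiD_bij[OF A] Hs_sub]) (use D_H[OF A w True] in auto)
    have cU: "card (?U \<inter> ?H) = card (Hs ?r ?uA)"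
      by (rule transfer_card[OF psiU_bij[OF A] Hs_sub]) (use U_H[OF A w] in auto)
    have cD2: "card ?D = card (Pn ?m)" by (rule bij_betw_same_card[OF phiD_bij[OF A]])
    have cU2: "card ?U = card (Pn ?r)" by (rule bij_betw_same_card[OF psiU_bij[OF A]])
    have cP: "card (Pn n) = card ?L + card ?D + card ?U + card ?R" by (rule card4[OF A])
    have cH: "card ?H = card (?L \<inter> ?H) + card (?D \<inter> ?H) + card (?U \<inter> ?H)"
      by (rule cardH[OF A RH Hs_sub])
    have ex: "card (Pn n) + card (?L \<inter> ?H) + card (Hs ?m ?y) + card (Hs ?r ?uA) =
              (card ?L + card ?R) + card ?H + card (Pn ?m) + card (Pn ?r)"
      using cD cU cD2 cU2 cP cH by simp
    have rhs: "barchi ?m ?y u' * barchi ?r ?uA u =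
       (if u' \<in> supp_mats (Hs ?m ?y) then ?q ^ card (Pn ?m) / ?q ^ card (Hs ?m ?y) else 0) *
       (if u \<in> supp_mats (Hs ?r ?uA) then ?q ^ card (Pn ?r) / ?q ^ card (Hs ?r ?uA) else 0)"
      by (simp only: barchi_eq)
    show ?thesis
    proof (cases "u' \<in> supp_mats (Hs ?m ?y) \<and> u \<in> supp_mats (Hs ?r ?uA)")
      case False
      then show ?thesis unfolding dela rhs using True e1 e2 by auto
    next
      case T2: True
      have "Dela n A (barchi n w) (u', u) = (1 / ?q) ^ (card ?L + card ?R) * (?K * ?q ^ card (?L \<inter> ?H))"
        unfolding dela using T2 e1 e2 RH by simp
      also have "\<dots> = ?q ^ card (Pn ?m) / ?q ^ card (Hs ?m ?y) * (?q ^ card (Pn ?r) / ?q ^ card (Hs ?r ?uA))"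
        by (rule pow_eq[OF qnz]) (use ex in simp)
      finally show ?thesis unfolding rhs using T2 True by simp
    qed
  qed
qed

theorem theorem5p5:
  fixes w :: "nat \<Rightarrow> nat" and n :: nat
  assumes "w permutes {1..n}"
  shows "\<forall>k \<le> n. \<forall>u' \<in> (ut (n - k) :: ('a::{finite,field}) mat set). \<forall>u \<in> (ut k :: 'a mat set).
    coproduct n (barchi n w) k (u', u) =
    (\<Sum>A \<in> {A. A \<subseteq> {1..n} \<and> card A = k \<and>
               is_inv_table (n - k) (restrict_seq (inv_tab n w) ({1..n} - A))}.
       barchi (n - k) (perm_of_inv_table (n - k) (restrict_seq (inv_tab n w) ({1..n} - A))) u'
       * barchi k (perm_of_dual_inv_table k
            (\<lambda>j. min (dual_inv_tab n w (sorted_list_of_set A ! (j - 1))) (k - j))) u)"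
proof (intro allI impI ballI)
  fix k u' u
  assume k: "k \<le> n" and u': "u' \<in> (ut (n - k) :: 'a mat set)" and u: "u \<in> (ut k :: 'a mat set)"
  let ?S = "{A. A \<subseteq> {1..n} \<and> card A = k}"
  let ?P = "\<lambda>A. is_inv_table (n - k) (restrict_seq (inv_tab n w) ({1..n} - A))"
  let ?t = "\<lambda>A. barchi (n - k) (perm_of_inv_table (n - k) (restrict_seq (inv_tab n w) ({1..n} - A))) u'
       * barchi k (perm_of_dual_inv_table k
            (\<lambda>j. min (dual_inv_tab n w (sorted_list_of_set A ! (j - 1))) (k - j))) u"
  have fS: "finite ?S" by (rule finite_subset[of _ "Pow {1..n}"]) auto
  have "coproduct n (barchi n w) k (u', u) = (\<Sum>A\<in>?S. Dela n A (barchi n w) (u', u))"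
    unfolding coproduct_def by simp
  also have "\<dots> = (\<Sum>A\<in>?S. if ?P A then ?t A else 0)"
  proof (rule sum.cong[OF refl])
    fix A assume "A \<in> ?S"
    then have A: "A \<subseteq> {1..n}" "card A = k" by auto
    show "Dela n A (barchi n w) (u', u) = (if ?P A then ?t A else 0)"
      using per_A[OF assms A(1), of u' u] u' u A(2) by simp
  qed
  also have "\<dots> = (\<Sum>A\<in>{A \<in> ?S. ?P A}. ?t A)"
    by (rule sum.inter_filter[OF fS, symmetric])
  also have "{A \<in> ?S. ?P A} = {A. A \<subseteq> {1..n} \<and> card A = k \<and> ?P A}" by auto
  finally show "coproduct n (barchi n w) k (u', u) = (\<Sum>A\<in>{A. A \<subseteq> {1..n} \<and> card A = k \<and> ?P A}. ?t A)" .
qed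

end
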